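(* Let $B\to A$ be a flat finite type morphism of Noetherian rings, $t\in B$ a non-zero-divisor, $I\subseteq A$ an ideal, and $A=B[z_1,\dots,z_n]/(f_1,\dots,f_m)$ a presentation. Let $B\to A'$ be a flat morphism of Noetherian rings, $I'\subseteq A'$ an ideal, $k\ge1$, and $\varphi:A/t^kI\to A'/t^kI'$ an isomorphism of $B$-algebras. For each $i$ let $\hat z_i\in A'$ be a lift of the image of $z_i$ under $A\to A/t^kI\xrightarrow{\varphi}A'/t^kI'$. Then the homomorphism $\widehat{B[z_1,\dots,z_n]}\to\widehat{A'}$, $z_i\mapsto\hat z_i$, is surjective, where $\widehat{\ }$ denotes $t$-adic completion. *)

theory Defs
  imports Main "HOL-Library.Poly_Mapping"
begin

definition is_ring_hom :: "('a::comm_ring_1 \<Rightarrow> 'b::comm_ring_1) \<Rightarrow> bool" where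
  "is_ring_hom h \<longleftrightarrow> h 1 = 1 \<and> (\<forall>x y. h (x + y) = h x + h y \<and> h (x * y) = h x * h y)"

definition is_ideal :: "'a::comm_ring_1 set \<Rightarrow> bool" where
  "is_ideal I \<longleftrightarrow> 0 \<in> I \<and> (\<forall>x\<in>I. \<forall>y\<in>I. x + y \<in> I) \<and> (\<forall>x\<in>I. \<forall>r. r * x \<in> I)"

definition ideal_gen :: "'a::comm_ring_1 set \<Rightarrow> 'a set" where
  "ideal_gen S = \<Inter>{I. is_ideal I \<and> S \<subseteq> I}"

definition noetherian_ring :: "'a::comm_ring_1 itself \<Rightarrow> bool" where
  "noetherian_ring _ \<longleftrightarrow> (\<forall>I::'a set. is_ideal I \<longrightarrow> (\<exists>F. finite F \<and> I = ideal_gen F))"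

definition non_zero_divisor :: "'a::comm_ring_1 \<Rightarrow> bool" where
  "non_zero_divisor t \<longleftrightarrow> (\<forall>x. t * x = 0 \<longrightarrow> x = 0)"

definition subalg_gen :: "('b::comm_ring_1 \<Rightarrow> 'a::comm_ring_1) \<Rightarrow> 'a set \<Rightarrow> 'a set" where
  "subalg_gen f S = \<Inter>{T. range f \<subseteq> T \<and> S \<subseteq> T \<and>
      (\<forall>x\<in>T. \<forall>y\<in>T. x + y \<in> T \<and> x * y \<in> T \<and> - x \<in> T)}"

definition finite_type :: "('b::comm_ring_1 \<Rightarrow> 'a::comm_ring_1) \<Rightarrow> bool" where
  "finite_type f \<longleftrightarrow> (\<exists>S. finite S \<and> subalg_gen f S = UNIV)"

text \<open>Tensor product J \<otimes>_B A of an ideal J of B with the B-module A (via f):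
  the free abelian group on J \<times> A modulo the bilinearity / balancing relations.
  A formal sum is zero in the tensor product iff it lies in the subgroup generated
  by the relations.\<close>

definition zspan :: "'x::ab_group_add set \<Rightarrow> 'x set" where
  "zspan S = \<Inter>{G. 0 \<in> G \<and> S \<subseteq> G \<and> (\<forall>x\<in>G. \<forall>y\<in>G. x - y \<in> G)}"

definition tensor_rels ::
  "('b::comm_ring_1 \<Rightarrow> 'a::comm_ring_1) \<Rightarrow> 'b set \<Rightarrow> (('b \<times> 'a) \<Rightarrow>\<^sub>0 int) set" where
  "tensor_rels f J =
     {Poly_Mapping.single (j + j', a) 1 - Poly_Mapping.single (j, a) 1 - Poly_Mapping.single (j', a) 1
        | j j' a. j \<in> J \<and> j' \<in> J}
   \<union> {Poly_Mapping.single (j, a + a') 1 - Poly_Mapping.single (j, a) 1 - Poly_Mapping.single (j, a') 1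
        | j a a'. j \<in> J}
   \<union> {Poly_Mapping.single (b * j, a) 1 - Poly_Mapping.single (j, f b * a) 1
        | b j a. j \<in> J}"

text \<open>Flatness of f : B -> A: for every ideal J of B the natural map
  J \<otimes>_B A -> A, j \<otimes> a \<mapsto> f j * a, is injective.\<close>
definition flat_hom :: "('b::comm_ring_1 \<Rightarrow> 'a::comm_ring_1) \<Rightarrow> bool" where
  "flat_hom f \<longleftrightarrow> (\<forall>J. is_ideal J \<longrightarrow>
     (\<forall>u :: ('b \<times> 'a) \<Rightarrow>\<^sub>0 int. Poly_Mapping.keys u \<subseteq> J \<times> UNIV \<longrightarrow>
        (\<Sum>p\<in>Poly_Mapping.keys u. of_int (Poly_Mapping.lookup u p) * (f (fst p) * snd p)) = 0 \<longrightarrow>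
        u \<in> zspan (tensor_rels f J)))"

text \<open>Polynomials over B in variables indexed by nat; B[z_0,...,z_{n-1}] is the
  subring of polynomials only involving variables < n.\<close>
type_synonym 'b mpoly = "(nat \<Rightarrow>\<^sub>0 nat) \<Rightarrow>\<^sub>0 'b"

definition polys_in :: "nat \<Rightarrow> 'b::comm_ring_1 mpoly set" where
  "polys_in n = {p. \<forall>mo\<in>Poly_Mapping.keys p. Poly_Mapping.keys mo \<subseteq> {..<n}}"

definition pconst :: "'b::comm_ring_1 \<Rightarrow> 'b mpoly" where
  "pconst b = Poly_Mapping.single 0 b"

definition pvar :: "nat \<Rightarrow> 'b::comm_ring_1 mpoly" where
  "pvar i = Poly_Mapping.single (Poly_Mapping.single i 1) 1"

definition peval :: "('b::comm_ring_1 \<Rightarrow> 'a::comm_ring_1) \<Rightarrow> (nat \<Rightarrow> 'a) \<Rightarrow> 'b mpoly \<Rightarrow> 'a" where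
  "peval h a p = (\<Sum>mo\<in>Poly_Mapping.keys p.
       h (Poly_Mapping.lookup p mo) * (\<Prod>i\<in>Poly_Mapping.keys mo. a i ^ Poly_Mapping.lookup mo i))"

text \<open>A = B[z_1..z_n]/(f_1..f_m) via z_i \<mapsto> a i: evaluation is surjective onto A
  with kernel the ideal of B[z_1..z_n] generated by f_1..f_m.\<close>
definition is_presentation ::
  "('b::comm_ring_1 \<Rightarrow> 'a::comm_ring_1) \<Rightarrow> nat \<Rightarrow> (nat \<Rightarrow> 'a) \<Rightarrow> nat \<Rightarrow> (nat \<Rightarrow> 'b mpoly) \<Rightarrow> bool" where
  "is_presentation f n a m fs \<longleftrightarrow>
     (\<forall>i<m. fs i \<in> polys_in n) \<and>
     (\<forall>x. \<exists>p\<in>polys_in n. peval f a p = x) \<and>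
     (\<forall>p\<in>polys_in n. peval f a p = 0 \<longleftrightarrow>
        (\<exists>r. (\<forall>i<m. r i \<in> polys_in n) \<and> p = (\<Sum>i<m. r i * fs i)))"

text \<open>phi : A -> A' induces an isomorphism of B-algebras A/J -> A'/J'
  (J, J' ideals), described on representatives.\<close>
definition quot_iso ::
  "('b::comm_ring_1 \<Rightarrow> 'a::comm_ring_1) \<Rightarrow> ('b \<Rightarrow> 'c::comm_ring_1) \<Rightarrow> 'a set \<Rightarrow> 'c set \<Rightarrow> ('a \<Rightarrow> 'c) \<Rightarrow> bool" where
  "quot_iso f g J J' phi \<longleftrightarrow>
     (\<forall>x y. x - y \<in> J \<longrightarrow> phi x - phi y \<in> J') \<and>
     (\<forall>x y. phi (x + y) - (phi x + phi y) \<in> J') \<and>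
     (\<forall>x y. phi (x * y) - phi x * phi y \<in> J') \<and>
     phi 1 - 1 \<in> J' \<and>
     (\<forall>b. phi (f b) - g b \<in> J') \<and>
     (\<forall>x. phi x \<in> J' \<longrightarrow> x \<in> J) \<and>
     (\<forall>c. \<exists>x. c - phi x \<in> J')"

text \<open>Elements of the s-adic completion of a ring with carrier P: compatible families
  (x_j mod s^j) with x_{j+1} \<equiv> x_j mod s^j P.\<close>
definition adic_compatible :: "'r::comm_ring_1 set \<Rightarrow> 'r \<Rightarrow> (nat \<Rightarrow> 'r) \<Rightarrow> bool" where
  "adic_compatible P s x \<longleftrightarrow> (\<forall>j. x j \<in> P \<and> (\<exists>q\<in>P. x (Suc j) - x j = s ^ j * q))"

definition completion_map_surj ::
  "('b::comm_ring_1 \<Rightarrow> 'c::comm_ring_1) \<Rightarrow> 'b \<Rightarrow> nat \<Rightarrow> (nat \<Rightarrow> 'c) \<Rightarrow> bool" where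
  "completion_map_surj g t n zh \<longleftrightarrow>
     (\<forall>y. adic_compatible UNIV (g t) y \<longrightarrow>
        (\<exists>x. adic_compatible (polys_in n) (pconst t) x \<and>
             (\<forall>j. \<exists>c. peval g zh (x j) - y j = g t ^ j * c)))"

end

theory Submission
  imports Defs
begin

lemma lookup_cmul: "Poly_Mapping.lookup (Poly_Mapping.single 0 s * p) k = s * Poly_Mapping.lookup p k"
  by (simp add: mult_map_scale_conv_mult[symmetric] Poly_Mapping.map.rep_eq when_def)

lemma keys_cmul: "Poly_Mapping.keys (Poly_Mapping.single 0 s * p) \<subseteq> Poly_Mapping.keys p"
  by (auto simp: in_keys_iff lookup_cmul)

lemma hom0: "is_ring_hom h \<Longrightarrow> h 0 = 0"
  unfolding is_ring_hom_def by (metis add_cancel_right_right add_0)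

lemma hom_pow: "is_ring_hom h \<Longrightarrow> h (x ^ j) = h x ^ j"
  by (induct j) (auto simp: is_ring_hom_def)

lemma peval_superset:
  assumes "is_ring_hom h" "finite S" "Poly_Mapping.keys p \<subseteq> S"
  shows "peval h a p = (\<Sum>mo\<in>S. h (Poly_Mapping.lookup p mo) * (\<Prod>i\<in>Poly_Mapping.keys mo. a i ^ Poly_Mapping.lookup mo i))"
  unfolding peval_def
  by (rule sum.mono_neutral_left) (use assms hom0[OF assms(1)] in \<open>auto simp: in_keys_iff\<close>)

lemma peval_add:
  assumes "is_ring_hom h"
  shows "peval h a (p + q) = peval h a p + peval h a q"
proof -
  let ?S = "Poly_Mapping.keys p \<union> Poly_Mapping.keys q"
  have f: "finite ?S" by simp
  have "peval h a (p + q) = (\<Sum>mo\<in>?S. h (Poly_Mapping.lookup (p+q) mo) * (\<Prod>i\<in>Poly_Mapping.keys mo. a i ^ Poly_Mapping.lookup mo i))"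
    by (rule peval_superset[OF assms f keys_add])
  also have "\<dots> = (\<Sum>mo\<in>?S. h (Poly_Mapping.lookup p mo) * (\<Prod>i\<in>Poly_Mapping.keys mo. a i ^ Poly_Mapping.lookup mo i))
     + (\<Sum>mo\<in>?S. h (Poly_Mapping.lookup q mo) * (\<Prod>i\<in>Poly_Mapping.keys mo. a i ^ Poly_Mapping.lookup mo i))"
    using assms by (simp add: lookup_add is_ring_hom_def distrib_right sum.distrib)
  also have "\<dots> = peval h a p + peval h a q"
    using peval_superset[OF assms f] by auto
  finally show ?thesis .
qed

lemma peval_cmul:
  assumes "is_ring_hom h"
  shows "peval h a (Poly_Mapping.single 0 c * q) = h c * peval h a q"
proof -
  have "peval h a (Poly_Mapping.single 0 c * q) = (\<Sum>mo\<in>Poly_Mapping.keys q. h (Poly_Mapping.lookup (Poly_Mapping.single 0 c * q) mo) * (\<Prod>i\<in>Poly_Mapping.keys mo. a i ^ Poly_Mapping.lookup mo i))"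
    by (rule peval_superset[OF assms _ keys_cmul]) simp
  also have "\<dots> = h c * peval h a q"
    using assms by (simp add: lookup_cmul is_ring_hom_def peval_def sum_distrib_left mult.assoc)
  finally show ?thesis .
qed

lemma pconst_pow: "pconst t ^ j = pconst (t ^ j)"
  by (induct j) (auto simp: pconst_def mult_single)

definition cg :: "'c::comm_ring_1 \<Rightarrow> 'c \<Rightarrow> 'c \<Rightarrow> bool" where
  "cg s a b \<longleftrightarrow> (\<exists>c. a - b = s * c)"

lemma cg_refl: "cg s a a" unfolding cg_def by (rule exI[of _ 0]) simp
lemma cg_sym: "cg s a b \<Longrightarrow> cg s b a" unfolding cg_def
proof -
  assume "\<exists>c. a - b = s * c" then obtain c where "a - b = s * c" by blast
  then have "b - a = s * (- c)" by (simp add: algebra_simps)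
  then show "\<exists>c. b - a = s * c" by blast
qed
lemma cg_trans: "cg s a b \<Longrightarrow> cg s b d \<Longrightarrow> cg s a d" unfolding cg_def
proof -
  assume "\<exists>c. a - b = s * c" "\<exists>c. b - d = s * c"
  then obtain c1 c2 where "a - b = s * c1" "b - d = s * c2" by blast
  moreover have "a - d = (a - b) + (b - d)" by simp
  ultimately have "a - d = s * (c1 + c2)" by (simp add: distrib_left)
  then show "\<exists>c. a - d = s * c" by blast
qed
lemma cg_add: "cg s a b \<Longrightarrow> cg s a' b' \<Longrightarrow> cg s (a + a') (b + b')"
  unfolding cg_def
proof -
  assume "\<exists>c. a - b = s * c" "\<exists>c. a' - b' = s * c"
  then obtain c1 c2 where "a - b = s * c1" "a' - b' = s * c2" by blast
  moreover have "(a + a') - (b + b') = (a - b) + (a' - b')" by (simp add: algebra_simps)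
  ultimately have "(a + a') - (b + b') = s * (c1 + c2)" by (simp add: distrib_left)
  then show "\<exists>c. (a + a') - (b + b') = s * c" by blast
qed
lemma cg_mult: "cg s a b \<Longrightarrow> cg s a' b' \<Longrightarrow> cg s (a * a') (b * b')"
proof -
  assume "cg s a b" "cg s a' b'"
  then obtain c1 c2 where "a - b = s * c1" "a' - b' = s * c2" unfolding cg_def by blast
  moreover have "a * a' - b * b' = a * (a' - b') + (a - b) * b'" by (simp add: algebra_simps)
  ultimately have "a * a' - b * b' = s * (a * c2 + c1 * b')" by (simp add: algebra_simps)
  then show ?thesis unfolding cg_def by blast
qed

lemma cg_sum:
  assumes "\<And>x y. cg s (phi (x + y)) (phi x + phi y)" "cg s (phi 0) 0"
    "\<And>x. x \<in> A \<Longrightarrow> cg s (phi (F x)) (G x)"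
  shows "cg s (phi (sum F A)) (sum G A)"
  using assms(3)
proof (induct A rule: infinite_finite_induct)
  case (infinite A) then show ?case using assms(2) by simp
next
  case empty then show ?case using assms(2) by simp
next
  case (insert x A)
  then show ?case
    by (simp) (metis cg_trans cg_add assms(1) insertCI)
qed

lemma cg_prod:
  assumes "\<And>x y. cg s (phi (x * y)) (phi x * phi y)" "cg s (phi 1) 1"
    "\<And>x. x \<in> A \<Longrightarrow> cg s (phi (F x)) (G x)"
  shows "cg s (phi (prod F A)) (prod G A)"
  using assms(3)
proof (induct A rule: infinite_finite_induct)
  case (infinite A) then show ?case using assms(2) by simp
next
  case empty then show ?case using assms(2) by simp
next
  case (insert x A)
  then show ?case
    by (simp) (metis cg_trans cg_mult assms(1) insertCI)
qed

lemma cg_pow: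
  assumes "\<And>x y. cg s (phi (x * y)) (phi x * phi y)" "cg s (phi 1) 1" "cg s (phi a) b"
  shows "cg s (phi (a ^ e)) (b ^ e)"
proof (induct e)
  case 0 then show ?case using assms(2) by simp
next
  case (Suc e)
  have "cg s (phi (a * a ^ e)) (phi a * phi (a ^ e))" by (rule assms(1))
  moreover have "cg s (phi a * phi (a ^ e)) (b * b ^ e)" by (rule cg_mult[OF assms(3) Suc])
  ultimately show ?case by (simp add: cg_trans)
qed

theorem mainTheorem8:
  fixes f :: "'b::comm_ring_1 \<Rightarrow> 'a::comm_ring_1"
    and g :: "'b \<Rightarrow> 'c::comm_ring_1"
    and t :: 'b
    and I :: "'a set" and I' :: "'c set"
    and n m k :: nat
    and z :: "nat \<Rightarrow> 'a" and fs :: "nat \<Rightarrow> 'b mpoly"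
    and phi :: "'a \<Rightarrow> 'c" and zh :: "nat \<Rightarrow> 'c"
  assumes "noetherian_ring TYPE('b)" and "noetherian_ring TYPE('a)" and "noetherian_ring TYPE('c)"
    and "is_ring_hom f" and "flat_hom f" and "finite_type f"
    and "non_zero_divisor t"
    and "is_ideal I"
    and "is_presentation f n z m fs"
    and "is_ring_hom g" and "flat_hom g"
    and "is_ideal I'"
    and "k \<ge> 1"
    and "quot_iso f g ((\<lambda>x. f t ^ k * x) ` I) ((\<lambda>x. g t ^ k * x) ` I') phi"
    and "\<forall>i<n. zh i - phi (z i) \<in> (\<lambda>x. g t ^ k * x) ` I'"
  shows "completion_map_surj g t n zh"
proof -
  let ?s = "g t"
  have J: "cg ?s a b" if "a - b \<in> (\<lambda>x. g t ^ k * x) ` I'" for a b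
  proof -
    from that obtain x where "a - b = g t ^ k * x" by blast
    also have "\<dots> = g t * (g t ^ (k - 1) * x)" using \<open>k \<ge> 1\<close>
      by (metis mult.assoc power_eq_if not_one_le_zero)
    finally show ?thesis unfolding cg_def by blast
  qed
  note Q = assms(14)[unfolded quot_iso_def]
  have padd: "cg ?s (phi (x + y)) (phi x + phi y)" for x y using Q J by blast
  have pmul: "cg ?s (phi (x * y)) (phi x * phi y)" for x y using Q J by blast
  have p1: "cg ?s (phi 1) 1" using Q J by blast
  have pf: "cg ?s (phi (f b)) (g b)" for b using Q J by blast
  have p0: "cg ?s (phi 0) 0"
  proof -
    have "cg ?s (phi (0 + 0)) (phi 0 + phi 0)" by (rule padd)
    then obtain c where "phi 0 - (phi 0 + phi 0) = ?s * c" unfolding cg_def by auto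
    then have "phi 0 - 0 = ?s * (- c)" by (simp add: algebra_simps) (metis minus_minus)
    then show ?thesis unfolding cg_def by blast
  qed
  have pz: "cg ?s (phi (z i)) (zh i)" if "i < n" for i
    using assms(15) that J cg_sym by blast
  have tr: "cg ?s (phi (peval f z p)) (peval g zh p)" if "p \<in> polys_in n" for p
    unfolding peval_def
  proof (rule cg_sum[OF padd p0])
    fix mo assume mo: "mo \<in> Poly_Mapping.keys p"
    then have sub: "Poly_Mapping.keys mo \<subseteq> {..<n}" using that unfolding polys_in_def by blast
    show "cg ?s (phi (f (Poly_Mapping.lookup p mo) * (\<Prod>i\<in>Poly_Mapping.keys mo. z i ^ Poly_Mapping.lookup mo i)))
      (g (Poly_Mapping.lookup p mo) * (\<Prod>i\<in>Poly_Mapping.keys mo. zh i ^ Poly_Mapping.lookup mo i))"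
    proof (rule cg_trans[OF pmul cg_mult[OF pf]])
      show "cg ?s (phi (\<Prod>i\<in>Poly_Mapping.keys mo. z i ^ Poly_Mapping.lookup mo i))
          (\<Prod>i\<in>Poly_Mapping.keys mo. zh i ^ Poly_Mapping.lookup mo i)"
        by (rule cg_prod[OF pmul p1], rule cg_pow[OF pmul p1 pz]) (use sub in auto)
    qed
  qed
  have surj: "\<exists>q\<in>polys_in n. cg ?s d (peval g zh q)" for d
  proof -
    obtain x where x: "d - phi x \<in> (\<lambda>x. g t ^ k * x) ` I'" using Q by blast
    obtain p where p: "p \<in> polys_in n" "peval f z p = x"
      using assms(9) unfolding is_presentation_def by blast
    show ?thesis using p tr[OF p(1)] J[OF x] cg_trans by metis
  qed
  then obtain QQ where QQ: "\<And>d. QQ d \<in> polys_in n \<and> cg ?s d (peval g zh (QQ d))" by metis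
  have pin_add: "p + q \<in> polys_in n" if "p \<in> polys_in n" "q \<in> polys_in n" for p q :: "'b mpoly"
    using that keys_add[of p q] unfolding polys_in_def by blast
  have pin_cmul: "pconst c * q \<in> polys_in n" if "q \<in> polys_in n" for c q
    using that keys_cmul[of c q] unfolding polys_in_def pconst_def by blast
  show ?thesis unfolding completion_map_surj_def
  proof (intro allI impI)
    fix y assume y: "adic_compatible UNIV (g t) y"
    define D where "D = (\<lambda>j xj. SOME d. y (Suc j) - peval g zh xj = g t ^ j * d)"
    define x where "x = rec_nat 0 (\<lambda>j xj. xj + pconst t ^ j * QQ (D j xj))"
    have x0: "x 0 = 0" and xS: "x (Suc j) = x j + pconst t ^ j * QQ (D j (x j))" for j
      unfolding x_def by simp_all
    have inv: "x j \<in> polys_in n \<and> (\<exists>c. peval g zh (x j) - y j = g t ^ j * c)" for j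
    proof (induct j)
      case 0
      have "peval g zh 0 - y 0 = g t ^ 0 * (peval g zh 0 - y 0)" by simp
      then show ?case unfolding x0 polys_in_def by auto
    next
      case (Suc j)
      then obtain c where c: "peval g zh (x j) - y j = g t ^ j * c" and xin: "x j \<in> polys_in n" by blast
      obtain q0 where q0: "y (Suc j) - y j = g t ^ j * q0" using y unfolding adic_compatible_def by blast
      have "y (Suc j) - peval g zh (x j) = g t ^ j * (q0 - c)"
        using c q0 by (simp add: algebra_simps)
      then have Dj: "y (Suc j) - peval g zh (x j) = g t ^ j * D j (x j)"
        unfolding D_def by (rule someI)
      obtain e where e: "D j (x j) - peval g zh (QQ (D j (x j))) = g t * e"
        using QQ unfolding cg_def by blast
      have pe: "peval g zh (x (Suc j)) = peval g zh (x j) + g t ^ j * peval g zh (QQ (D j (x j)))"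
      proof -
        have aux: "pconst t ^ j * QQ (D j (x j)) = Poly_Mapping.single 0 (t ^ j) * QQ (D j (x j))"
          using pconst_pow[of t j] unfolding pconst_def by simp
        show ?thesis unfolding xS aux peval_add[OF assms(10)] peval_cmul[OF assms(10)] hom_pow[OF assms(10)]
          by simp
      qed
      have "peval g zh (x (Suc j)) - y (Suc j) = g t ^ Suc j * (- e)"
      proof -
        have "peval g zh (x (Suc j)) - y (Suc j)
            = - (y (Suc j) - peval g zh (x j)) + g t ^ j * peval g zh (QQ (D j (x j)))"
          using pe by (simp add: algebra_simps)
        also have "\<dots> = - (g t ^ j * (D j (x j) - peval g zh (QQ (D j (x j)))))"
          using Dj by (simp add: algebra_simps)
        also have "\<dots> = g t ^ Suc j * (- e)" unfolding e by (simp add: algebra_simps)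
        finally show ?thesis .
      qed
      moreover have "x (Suc j) \<in> polys_in n"
        unfolding xS pconst_pow by (rule pin_add[OF xin pin_cmul[OF conjunct1[OF QQ]]])
      ultimately show ?case by (intro conjI exI)
    qed
    show "\<exists>x. adic_compatible (polys_in n) (pconst t) x \<and> (\<forall>j. \<exists>c. peval g zh (x j) - y j = g t ^ j * c)"
    proof -
      have A: "adic_compatible (polys_in n) (pconst t) x"
        unfolding adic_compatible_def
      proof
        fix j
        have "x (Suc j) - x j = pconst t ^ j * QQ (D j (x j))" by (simp add: xS)
        moreover have "QQ (D j (x j)) \<in> polys_in n" using QQ by blast
        ultimately show "x j \<in> polys_in n \<and> (\<exists>q\<in>polys_in n. x (Suc j) - x j = pconst t ^ j * q)"
          using inv by blast
      qed
      have B: "\<forall>j. \<exists>c. peval g zh (x j) - y j = g t ^ j * c" using inv by blast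
      show ?thesis using A B by blast
    qed
  qed
qed

end
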